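(* Let $N\in\mathbb{N}$ and $\alpha,\beta>-1$, and let $z_1\le\dots\le z_N$ be the ordered zeros of the Jacobi polynomial $P_N^{(\alpha,\beta)}$. Define the $N\times N$ matrix $S=(s_{i,j})$ by $$s_{j,j}=\sum_{l=1,\,l\ne j}^N\frac{1}{(z_j-z_l)^2}+\frac{\alpha+1}{2}\frac{1}{(1-z_j)^2}+\frac{\beta+1}{2}\frac{1}{(1+z_j)^2},\qquad s_{i,j}=\frac{-1}{(z_i-z_j)^2}\ (i\ne j).$$ Then $$\det(S)=\frac{N!}{2^{3N}}\,\frac{\bigl((N+\alpha+\beta+1)_N\bigr)^3}{(\alpha+1)_N(\beta+1)_N}.$$
   Context: $P_N^{(\alpha,\beta)}$ denotes the classical Jacobi polynomial of degree $N$, orthogonal on $]-1,1[$ with respect to the weight $(1-x)^\alpha(1+x)^\beta$; its zeros are simple and lie in $]-1,1[$. $(x)_N:=x(x+1)\cdots(x+N-1)$ is the Pochhammer symbol. *)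

theory Defs
  imports Complex_Main "Jordan_Normal_Form.Determinant"
begin

text \<open>Classical Jacobi polynomial P_N^(a,b)(x), via the standard hypergeometric
  representation
  P_N(x) = (a+1)_N / N! * sum_{k=0}^N (-N)_k (N+a+b+1)_k / ((a+1)_k k!) ((1-x)/2)^k.\<close>
definition jacobiP :: "nat \<Rightarrow> real \<Rightarrow> real \<Rightarrow> real \<Rightarrow> real" where
  "jacobiP N a b x =
     pochhammer (a + 1) N / fact N *
     (\<Sum>k=0..N. pochhammer (- real N) k * pochhammer (real N + a + b + 1) k
                 / (pochhammer (a + 1) k * fact k) * ((1 - x) / 2) ^ k)"

text \<open>The matrix S, indexed 0..N-1, built from zeros z 0 < ... < z (N-1).\<close>
definition S_matrix :: "nat \<Rightarrow> real \<Rightarrow> real \<Rightarrow> (nat \<Rightarrow> real) \<Rightarrow> real mat" where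
  "S_matrix N a b z = mat N N (\<lambda>(i, j).
     if i = j then
       (\<Sum>l\<in>{0..<N} - {j}. 1 / (z j - z l)^2)
       + (a + 1) / 2 * (1 / (1 - z j)^2) + (b + 1) / 2 * (1 / (1 + z j)^2)
     else - 1 / (z i - z j)^2)"

end

theory Submission imports Defs "HOL-Computational_Algebra.Polynomial" "HOL-Computational_Algebra.Formal_Power_Series" begin

definition Gp :: "nat \<Rightarrow> real \<Rightarrow> real poly" where
  "Gp m y = (\<Sum>i<m. monom (y ^ (m - Suc i)) i)"

fun Hp :: "nat \<Rightarrow> real \<Rightarrow> real poly" where
  "Hp 0 y = 0"
| "Hp (Suc m) y = pCons 0 (Hp m y) + Gp m y"

lemma poly_Gp: "poly (Gp m y) x * (x - y) = x ^ m - y ^ m"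
  unfolding Gp_def by (simp add: poly_sum poly_monom power_diff_sumr2 mult.commute)

lemma coeff_Gp: "coeff (Gp m y) n = (if n < m then y ^ (m - Suc n) else 0)"
  unfolding Gp_def by (simp add: coeff_sum)

lemma Hp_identity:
  "x ^ m - y ^ m = of_nat m * x ^ (m - 1) * (x - y) - poly (Hp m y) x * (x - y)^2"
proof (induction m)
  case 0 then show ?case by simp
next
  case (Suc m)
  have e: "of_nat m * x * x ^ (m - 1) = of_nat m * x ^ m"
    by (cases m) auto
  have "x ^ Suc m - y ^ Suc m = x * (x^m - y^m) + y^m * (x - y)"
    by (simp add: algebra_simps)
  also have "\<dots> = x * (of_nat m * x ^ (m - 1) * (x - y) - poly (Hp m y) x * (x - y)^2) + y^m * (x - y)"
    using Suc by simp
  also have "\<dots> = of_nat (Suc m) * x ^ m * (x - y) - (x * poly (Hp m y) x + poly (Gp m y) x) * (x - y)^2"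
  proof -
    have "(x * poly (Hp m y) x + poly (Gp m y) x) * (x - y)^2
       = x * poly (Hp m y) x * (x - y)^2 + (poly (Gp m y) x * (x - y)) * (x - y)"
      by (simp add: algebra_simps power2_eq_square)
    also have "\<dots> = x * poly (Hp m y) x * (x - y)^2 + (x^m - y^m) * (x - y)"
      by (simp add: poly_Gp)
    finally have h: "(x * poly (Hp m y) x + poly (Gp m y) x) * (x - y)^2 = x * poly (Hp m y) x * (x - y)^2 + (x^m - y^m) * (x - y)" .
    show ?thesis unfolding h by (cases m) (simp_all add: algebra_simps)
  qed
  finally show ?case by simp
qed

lemma coeff_Hp_zero: "m < n + 2 \<Longrightarrow> coeff (Hp m y) n = 0"
proof (induction m arbitrary: n)
  case 0 then show ?case by simp
next
  case (Suc m)
  then show ?case by (cases n) (auto simp: coeff_Gp coeff_pCons)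
qed

lemma coeff_Hp_top: "coeff (Hp (n + 2) y) n = of_nat (n + 1)"
proof (induction n)
  case 0 then show ?case by (simp add: Gp_def numeral_2_eq_2)
next
  case (Suc n)
  then show ?case by (simp add: coeff_Gp coeff_pCons)
qed

lemma Hp_diag: "poly (Hp m x) x = of_nat m * (of_nat m - 1) / 2 * x ^ (m - 2)"
proof (induction m)
  case 0 then show ?case by simp
next
  case (Suc m)
  have g: "poly (Gp m x) x = of_nat m * x ^ (m - 1)"
    unfolding Gp_def by (simp add: poly_sum poly_monom power_add[symmetric])
  have s: "poly (Hp (Suc m) x) x = x * poly (Hp m x) x + poly (Gp m x) x" by simp
  show ?case
  proof (cases "m < 2")
    case True
    then have "m = 0 \<or> m = 1" by auto
    then show ?thesis using Suc.IH g s by (auto simp: Gp_def)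
  next
    case False
    then have e: "x * x ^ (m - 2) = x ^ (m - 1)" "Suc m - 2 = m - 1"
      by (simp_all add: power_Suc[symmetric] Suc_diff_Suc numeral_2_eq_2)
    have "poly (Hp (Suc m) x) x = of_nat m * (of_nat m - 1) / 2 * (x * x ^ (m - 2)) + of_nat m * x ^ (m - 1)"
      using s Suc.IH g by simp
    also have "\<dots> = of_nat (Suc m) * (of_nat (Suc m) - 1) / 2 * x ^ (Suc m - 2)"
      unfolding e by (simp add: field_simps)
    finally show ?thesis .
  qed
qed

lemma prod_list_upt: "prod_list (map f [0..<n]) = (\<Prod>i<n. f i)"
  by (induction n) auto

definition cS :: "real \<Rightarrow> real \<Rightarrow> real \<Rightarrow> real" where
  "cS a b x = (a + 1) / 2 * (1 / (1 - x)^2) + (b + 1) / 2 * (1 / (1 + x)^2)"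

lemma S_row_sum:
  assumes j: "j < N"
  shows "(\<Sum>i<N. S_matrix N a b z $$ (j, i) * g (z i)) =
     (\<Sum>i\<in>{0..<N} - {j}. (g (z j) - g (z i)) / (z j - z i)^2) + cS a b (z j) * g (z j)"
proof -
  have fin: "finite ({0..<N} - {j})" by simp
  have "(\<Sum>i<N. S_matrix N a b z $$ (j, i) * g (z i)) = (\<Sum>i\<in>{0..<N}. S_matrix N a b z $$ (j, i) * g (z i))"
    by (simp add: lessThan_atLeast0)
  also have "\<dots> = S_matrix N a b z $$ (j, j) * g (z j) + (\<Sum>i\<in>{0..<N} - {j}. S_matrix N a b z $$ (j, i) * g (z i))"
    using j by (subst sum.remove[of _ j]) auto
  also have "(\<Sum>i\<in>{0..<N} - {j}. S_matrix N a b z $$ (j, i) * g (z i)) = (\<Sum>i\<in>{0..<N} - {j}. - g (z i) / (z j - z i)^2)"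
    using j by (intro sum.cong) (auto simp: S_matrix_def)
  also have "S_matrix N a b z $$ (j, j) = (\<Sum>l\<in>{0..<N} - {j}. 1 / (z j - z l)^2) + cS a b (z j)"
    using j by (simp add: S_matrix_def cS_def)
  finally have A: "(\<Sum>i<N. S_matrix N a b z $$ (j, i) * g (z i)) = ((\<Sum>l\<in>{0..<N} - {j}. 1 / (z j - z l)^2) + cS a b (z j)) * g (z j) + (\<Sum>i\<in>{0..<N} - {j}. - g (z i) / (z j - z i)^2)" .
  have B: "(\<Sum>i\<in>{0..<N} - {j}. (g (z j) - g (z i)) / (z j - z i)^2) = g (z j) * (\<Sum>l\<in>{0..<N} - {j}. 1 / (z j - z l)^2) + (\<Sum>i\<in>{0..<N} - {j}. - g (z i) / (z j - z i)^2)"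
    by (simp add: diff_divide_distrib sum_subtractf sum_distrib_left sum_negf)
  show ?thesis unfolding A B by (simp add: algebra_simps)
qed

lemma stieltjes_core:
  fixes a b x s :: real
  assumes "x \<noteq> 1" "x \<noteq> -1" and st: "(1 - x^2) * s = ((a - b) + (a + b + 2) * x) / 2"
  shows "- 2 * x * s + cS a b x * (1 - x^2) = (a + b + 2) / 2"
proof -
  have d1: "1 - x \<noteq> 0" "1 + x \<noteq> 0" using assms by auto
  have f: "1 - x^2 = (1 - x) * (1 + x)" by (simp add: algebra_simps power2_eq_square)
  then have nz: "1 - x^2 \<noteq> 0" using d1 by simp
  have "s = ((1 - x^2) * s) / (1 - x^2)" using nz by simp
  then have "s = ((a - b) + (a + b + 2) * x) / 2 / (1 - x^2)"
    unfolding st .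
  then have s: "s = ((a - b) + (a + b + 2) * x) / 2 / ((1 - x) * (1 + x))"
    unfolding f .
  have gen: "\<And>u v::real. u \<noteq> 0 \<Longrightarrow> 1 / u^2 * (u * v) = v / u"
    by (simp add: power2_eq_square field_simps)
  have h1: "1 / (1 - x)^2 * (1 - x^2) = (1 + x) / (1 - x)"
    unfolding f using d1 gen by blast
  have h2: "1 / (1 + x)^2 * (1 - x^2) = (1 - x) / (1 + x)"
    unfolding f using d1 gen[of "1 + x" "1 - x"] by (simp add: mult.commute)
  have "cS a b x * (1 - x^2) = (a + 1) / 2 * (1 / (1 - x)^2 * (1 - x^2)) + (b + 1) / 2 * (1 / (1 + x)^2 * (1 - x^2))"
    unfolding cS_def by (simp add: algebra_simps)
  also have "\<dots> = (a + 1) / 2 * ((1 + x) / (1 - x)) + (b + 1) / 2 * ((1 - x) / (1 + x))"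
    unfolding h1 h2 ..
  finally have c: "cS a b x * (1 - x^2) = (a + 1) / 2 * ((1 + x) / (1 - x)) + (b + 1) / 2 * ((1 - x) / (1 + x))" .
  have gen2: "\<And>u v. u \<noteq> 0 \<Longrightarrow> v \<noteq> 0 \<Longrightarrow> u = 1 - x \<Longrightarrow> v = 1 + x \<Longrightarrow>
     - 2 * x * (((a - b) + (a + b + 2) * x) / 2 / (u * v)) + ((a + 1) / 2 * (v / u) + (b + 1) / 2 * (u / v)) = (a + b + 2) / 2"
  proof -
    fix u v :: real assume u: "u \<noteq> 0" and v: "v \<noteq> 0" and uu: "u = 1 - x" and vv: "v = 1 + x"
    have "(a + 1) * v * v + (b + 1) * u * u - 2 * x * ((a - b) + (a + b + 2) * x) = (a + b + 2) * u * v"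
      unfolding uu vv by (simp add: algebra_simps)
    then have H2: "(8*u*v) * ((a + 1) * v * v + (b + 1) * u * u - 2 * x * ((a - b) + (a + b + 2) * x)) = (8*u*v) * ((a + b + 2) * u * v)"
      by simp
    show "- 2 * x * (((a - b) + (a + b + 2) * x) / 2 / (u * v)) + ((a + 1) / 2 * (v / u) + (b + 1) / 2 * (u / v)) = (a + b + 2) / 2"
      using u v apply (simp add: field_simps) using H2 by (simp add: algebra_simps)
  qed
  show ?thesis unfolding c s using d1 by (intro gen2) auto
qed

lemma stieltjes_k:
  fixes a b x s :: real
  assumes "x \<noteq> 1" "x \<noteq> -1" and st: "(1 - x^2) * s = ((a - b) + (a + b + 2) * x) / 2"
  shows "(of_nat k * x^(k-1) - (of_nat k + 2) * x^(k+1)) * s + cS a b x * (x^k - x^(k+2))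
     = of_nat k * x^(k-1) * (((a - b) + (a + b + 2) * x) / 2) + x^k * ((a + b + 2) / 2)"
proof -
  have core: "- 2 * x * s + cS a b x * (1 - x^2) = (a + b + 2) / 2"
    using stieltjes_core[OF assms] .
  have e1: "of_nat k * x^(k-1) * x^2 = of_nat k * x^(k+1)"
    by (cases k) (auto simp: power2_eq_square)
  have "(of_nat k * x^(k-1) - (of_nat k + 2) * x^(k+1)) * s + cS a b x * (x^k - x^(k+2))
      = of_nat k * x^(k-1) * ((1 - x^2) * s) + x^k * (- 2 * x * s + cS a b x * (1 - x^2))"
    using e1 by (simp add: algebra_simps power2_eq_square)
  also have "\<dots> = of_nat k * x^(k-1) * (((a - b) + (a + b + 2) * x) / 2) + x^k * ((a + b + 2) / 2)"
    by (simp only: st core)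
  finally show ?thesis .
qed

lemma div_sq_aux: "(d::real) \<noteq> 0 \<Longrightarrow> (A * d - H * d^2) / d^2 = A / d - H"
  by (simp add: field_simps power2_eq_square)

lemma Hp_quot: "x \<noteq> y \<Longrightarrow> (x ^ m - y ^ m) / (x - y)^2 = of_nat m * x ^ (m - 1) / (x - y) - poly (Hp m y) x"
  by (subst Hp_identity) (rule div_sq_aux, simp)

lemma term_id:
  assumes "x \<noteq> (y::real)"
  shows "((x^k - x^(k+2)) - (y^k - y^(k+2))) / (x - y)^2 =
     (of_nat k * x^(k-1) - (of_nat k + 2) * x^(k+1)) * (1 / (x - y)) - (poly (Hp k y) x - poly (Hp (k+2) y) x)"
proof -
  have "((x^k - x^(k+2)) - (y^k - y^(k+2))) / (x - y)^2 = (x^k - y^k) / (x - y)^2 - (x^(k+2) - y^(k+2)) / (x - y)^2"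
    by (simp add: diff_divide_distrib[symmetric] algebra_simps)
  also have "\<dots> = (of_nat k * x ^ (k - 1) / (x - y) - poly (Hp k y) x) - (of_nat (k+2) * x ^ (k + 2 - 1) / (x - y) - poly (Hp (k+2) y) x)"
    using Hp_quot[OF assms, of k] Hp_quot[OF assms, of "k+2"] by simp
  also have "\<dots> = (of_nat k * x^(k-1) - (of_nat k + 2) * x^(k+1)) * (1 / (x - y)) - (poly (Hp k y) x - poly (Hp (k+2) y) x)"
  proof -
    have B: "of_nat (k+2) * x^(k+2-1) = (of_nat k + 2) * x^(k+1)" by simp
    have gen3: "\<And>A B d H1 H2::real. (A/d - H1) - (B/d - H2) = (A - B) * (1/d) - (H1 - H2)"
      by (simp add: diff_divide_distrib)
    show ?thesis unfolding B by (rule gen3)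
  qed
  finally show ?thesis .
qed

definition Qp :: "nat \<Rightarrow> real \<Rightarrow> real \<Rightarrow> (nat \<Rightarrow> real) \<Rightarrow> nat \<Rightarrow> real poly" where
  "Qp N a b z k = smult (of_nat k) (monom 1 (k - 1) * [:(a - b) / 2, (a + b + 2) / 2:]) + monom ((a + b + 2) / 2) k
     - (\<Sum>i<N. Hp k (z i) - Hp (k + 2) (z i)) + monom (of_nat k * (of_nat k - 1) / 2) (k - 2)
     - monom ((of_nat k + 2) * (of_nat k + 1) / 2) k"

lemma poly_Qp: "poly (Qp N a b z k) x = of_nat k * x^(k-1) * (((a - b) + (a + b + 2) * x) / 2) + x^k * ((a + b + 2) / 2)
   - (\<Sum>i<N. poly (Hp k (z i)) x - poly (Hp (k + 2) (z i)) x) + poly (Hp k x) x - poly (Hp (k+2) x) x"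
  unfolding Qp_def Hp_diag by (simp add: poly_sum poly_monom) (simp add: field_simps)

lemma key_entry:
  assumes inj: "inj_on z {0..<N}" and j: "j < N" and z1: "z j \<noteq> 1" "z j \<noteq> -1"
    and st: "(1 - z j ^ 2) * (\<Sum>l\<in>{0..<N} - {j}. 1 / (z j - z l)) = ((a - b) + (a + b + 2) * z j) / 2"
  shows "(\<Sum>i<N. S_matrix N a b z $$ (j, i) * ((1 - z i ^ 2) * z i ^ k)) = poly (Qp N a b z k) (z j)"
proof -
  define g where "g = (\<lambda>x::real. x^k - x^(k+2))"
  define F where "F = (\<lambda>i. poly (Hp k (z i)) (z j) - poly (Hp (k+2) (z i)) (z j))"
  let ?I = "{0..<N} - {j}"
  have gi: "\<And>x. (1 - x^2) * x^k = g x" unfolding g_def by (simp add: algebra_simps power_add power2_eq_square)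
  have "(\<Sum>i<N. S_matrix N a b z $$ (j, i) * ((1 - z i ^ 2) * z i ^ k)) = (\<Sum>i<N. S_matrix N a b z $$ (j, i) * g (z i))"
    unfolding gi ..
  also have "\<dots> = (\<Sum>i\<in>?I. (g (z j) - g (z i)) / (z j - z i)^2) + cS a b (z j) * g (z j)"
    by (rule S_row_sum[OF j])
  also have "(\<Sum>i\<in>?I. (g (z j) - g (z i)) / (z j - z i)^2) =
      (\<Sum>i\<in>?I. (of_nat k * z j^(k-1) - (of_nat k + 2) * z j^(k+1)) * (1 / (z j - z i)) - F i)"
  proof (rule sum.cong)
    fix i assume i: "i \<in> ?I"
    then have "z j \<noteq> z i" using inj j by (auto dest: inj_onD)
    then show "(g (z j) - g (z i)) / (z j - z i)^2 = (of_nat k * z j^(k-1) - (of_nat k + 2) * z j^(k+1)) * (1 / (z j - z i)) - F i"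
      unfolding g_def F_def by (rule term_id)
  qed simp
  also have "\<dots> = (of_nat k * z j^(k-1) - (of_nat k + 2) * z j^(k+1)) * (\<Sum>i\<in>?I. 1 / (z j - z i)) - (\<Sum>i\<in>?I. F i)"
    by (simp add: sum_subtractf sum_distrib_left)
  also have "(\<Sum>i\<in>?I. F i) = (\<Sum>i<N. F i) - F j"
  proof -
    have "(\<Sum>i<N. F i) = F j + (\<Sum>i\<in>?I. F i)"
      using j by (simp add: lessThan_atLeast0 sum.remove[of "{0..<N}" j])
    then show ?thesis by simp
  qed
  finally have "(\<Sum>i<N. S_matrix N a b z $$ (j, i) * ((1 - z i ^ 2) * z i ^ k)) =
     ((of_nat k * z j^(k-1) - (of_nat k + 2) * z j^(k+1)) * (\<Sum>i\<in>?I. 1 / (z j - z i)) + cS a b (z j) * (z j^k - z j^(k+2)))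
     - ((\<Sum>i<N. F i) - F j)"
    unfolding g_def by simp
  also have "(of_nat k * z j^(k-1) - (of_nat k + 2) * z j^(k+1)) * (\<Sum>i\<in>?I. 1 / (z j - z i)) + cS a b (z j) * (z j^k - z j^(k+2))
     = of_nat k * z j^(k-1) * (((a - b) + (a + b + 2) * z j) / 2) + z j^k * ((a + b + 2) / 2)"
    by (rule stieltjes_k[OF z1 st])
  finally show ?thesis unfolding poly_Qp F_def by simp
qed

lemma coeff_Qp_zero:
  assumes "k < m"
  shows "coeff (Qp N a b z k) m = 0"
proof -
  have c1: "coeff (smult (of_nat k) (monom 1 (k - 1) * [:(a - b) / 2, (a + b + 2) / 2:])) m = 0"
  proof (cases k)
    case 0 then show ?thesis by simp
  next
    case (Suc k')
    then have "m - (k - 1) \<ge> 2" using assms by simp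
    then obtain r where "m - (k - 1) = Suc (Suc r)" by (metis add_2_eq_Suc le_Suc_ex)
    moreover have "coeff (monom 1 (k - 1) * [:(a - b) / 2, (a + b + 2) / 2:]) m = (if m < k - 1 then 0 else 1 * coeff [:(a - b) / 2, (a + b + 2) / 2:] (m - (k - 1)))"
      by (rule coeff_monom_mult)
    ultimately show ?thesis using assms by simp
  qed
  have c2: "coeff (\<Sum>i<N. Hp k (z i) - Hp (k + 2) (z i)) m = 0"
  proof -
    have "\<And>i. coeff (Hp k (z i) - Hp (k + 2) (z i)) m = 0"
      using assms coeff_Hp_zero[of k m] coeff_Hp_zero[of "k+2" m] by (simp del: Hp.simps)
    then show ?thesis by (simp add: coeff_sum del: Hp.simps)
  qed
  show ?thesis unfolding Qp_def using c1 c2 assms by (simp add: coeff_monom del: Hp.simps)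
qed

lemma coeff_Qp_diag:
  "coeff (Qp N a b z k) k = (of_nat k + 1) * (2 * of_nat N + a + b - of_nat k) / 2"
proof -
  have c1: "coeff (smult (of_nat k) (monom 1 (k - 1) * [:(a - b) / 2, (a + b + 2) / 2:])) k = of_nat k * ((a + b + 2) / 2)"
  proof (cases k)
    case 0 then show ?thesis by simp
  next
    case (Suc k')
    then show ?thesis by (simp add: coeff_monom_mult)
  qed
  have c2: "coeff (\<Sum>i<N. Hp k (z i) - Hp (k + 2) (z i)) k = - (of_nat N * (of_nat k + 1))"
  proof -
    have "\<And>i. coeff (Hp k (z i) - Hp (k + 2) (z i)) k = - (of_nat k + 1)"
      using coeff_Hp_zero[of k k] coeff_Hp_top[of k] by (simp del: Hp.simps)
    then have "coeff (\<Sum>i<N. Hp k (z i) - Hp (k + 2) (z i)) k = (\<Sum>i<N. - (of_nat k + 1))"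
      by (simp only: coeff_sum)
    then show ?thesis by (simp add: algebra_simps)
  qed
  have c3: "coeff (monom (of_nat k * (of_nat k - 1) / 2) (k - 2)) k = (0::real)"
    by (cases k) (auto simp: coeff_monom)
  show ?thesis unfolding Qp_def using c1 c2 c3
    by (simp add: coeff_monom field_simps del: Hp.simps)
qed

lemma degree_Qp: "degree (Qp N a b z k) \<le> k"
  by (rule degree_le) (auto simp: coeff_Qp_zero)

lemma vandermonde_det_nz:
  assumes inj: "inj_on (z::nat \<Rightarrow> real) {0..<N}"
  shows "det (mat N N (\<lambda>(j, k). z j ^ k)) \<noteq> 0"
proof
  let ?V = "mat N N (\<lambda>(j, k). z j ^ k)"
  assume "det ?V = 0"
  then obtain v where v: "v \<in> carrier_vec N" "v \<noteq> 0\<^sub>v N" "?V *\<^sub>v v = 0\<^sub>v N"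
    using det_0_iff_vec_prod_zero[of ?V N] by auto
  define p where "p = (\<Sum>k<N. monom (v $ k) k)"
  have cp: "coeff p i = (if i < N then v $ i else 0)" for i
    unfolding p_def by (simp add: coeff_sum coeff_monom)
  have N0: "N > 0"
  proof (rule ccontr)
    assume "\<not> N > 0"
    then have "N = 0" by simp
    then show False using v by auto
  qed
  have roots: "poly p (z j) = 0" if j: "j < N" for j
  proof -
    have "(?V *\<^sub>v v) $ j = 0" using v(3) j by simp
    moreover have "(?V *\<^sub>v v) $ j = (\<Sum>k<N. z j ^ k * v $ k)"
      using j v(1) by (simp add: scalar_prod_def lessThan_atLeast0)
    moreover have "poly p (z j) = (\<Sum>k<N. z j ^ k * v $ k)"
      unfolding p_def by (simp add: poly_sum poly_monom mult.commute)
    ultimately show ?thesis by simp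
  qed
  have deg: "degree p < N"
  proof -
    have "degree p \<le> N - 1" by (rule degree_le) (use N0 in \<open>auto simp: cp\<close>)
    then show ?thesis using N0 by simp
  qed
  have card: "card (z ` {0..<N}) = N" using inj by (simp add: card_image)
  have "p = 0"
    by (rule poly_eqI_degree[of "z ` {0..<N}"]) (use roots deg card in auto)
  have "v $ i = 0" if i: "i < N" for i
    using cp[of i] i \<open>p = 0\<close> by simp
  then have "v = 0\<^sub>v N"
    using v(1) by (intro eq_vecI) auto
  then show False using v(2) by simp
qed

lemma matrix_det:
  assumes inj: "inj_on z {0..<N}"
    and z1: "\<And>j. j < N \<Longrightarrow> z j \<noteq> 1 \<and> z j \<noteq> -1"
    and st: "\<And>j. j < N \<Longrightarrow> (1 - z j ^ 2) * (\<Sum>l\<in>{0..<N} - {j}. 1 / (z j - z l)) = ((a - b) + (a + b + 2) * z j) / 2"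
  shows "det (S_matrix N a b z) * (\<Prod>i<N. 1 - z i ^ 2) = (\<Prod>k<N. (of_nat k + 1) * (2 * of_nat N + a + b - of_nat k) / 2)"
proof -
  define V where "V = mat N N (\<lambda>(j, k). z j ^ k)"
  define D where "D = mat N N (\<lambda>(i, j). if i = j then 1 - z i ^ 2 else (0::real))"
  define U where "U = mat N N (\<lambda>(m, k). coeff (Qp N a b z k) m)"
  define S where "S = S_matrix N a b z"
  have carr: "V \<in> carrier_mat N N" "D \<in> carrier_mat N N" "U \<in> carrier_mat N N" "S \<in> carrier_mat N N"
    unfolding V_def D_def U_def S_def S_matrix_def by auto
  have DV: "D * V = mat N N (\<lambda>(i, k). (1 - z i ^ 2) * z i ^ k)"
  proof (rule eq_matI)
    fix i k assume i: "i < dim_row (mat N N (\<lambda>(i, k). (1 - z i ^ 2) * z i ^ k))"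
      and k: "k < dim_col (mat N N (\<lambda>(i, k). (1 - z i ^ 2) * z i ^ k))"
    have "(D * V) $$ (i, k) = (\<Sum>l\<in>{0..<N}. (if i = l then 1 - z i ^ 2 else 0) * z l ^ k)"
      using i k unfolding D_def V_def by (simp add: scalar_prod_def)
    also have "\<dots> = (1 - z i ^ 2) * z i ^ k"
      using i by (simp add: if_distrib[of "\<lambda>x. x * _"] sum.delta cong: if_cong)
    finally show "(D * V) $$ (i, k) = mat N N (\<lambda>(i, k). (1 - z i ^ 2) * z i ^ k) $$ (i, k)"
      using i k by simp
  qed (auto simp: D_def V_def)
  have eq: "S * (D * V) = V * U"
  proof (rule eq_matI)
    fix j k assume j: "j < dim_row (V * U)" and k: "k < dim_col (V * U)"
    then have j': "j < N" and k': "k < N" using carr by auto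
    have "(S * (D * V)) $$ (j, k) = (\<Sum>i\<in>{0..<N}. S $$ (j, i) * ((1 - z i ^ 2) * z i ^ k))"
      using j' k' carr unfolding DV by (simp add: scalar_prod_def)
    also have "\<dots> = poly (Qp N a b z k) (z j)"
      unfolding S_def using key_entry[OF inj j' _ _ st[OF j'], of k] z1[OF j']
      by (simp add: lessThan_atLeast0)
    also have "\<dots> = (\<Sum>m\<in>{0..<N}. z j ^ m * coeff (Qp N a b z k) m)"
    proof -
      have "poly (Qp N a b z k) (z j) = (\<Sum>m\<le>degree (Qp N a b z k). coeff (Qp N a b z k) m * z j ^ m)"
        by (rule poly_altdef)
      also have "\<dots> = (\<Sum>m\<in>{0..<N}. coeff (Qp N a b z k) m * z j ^ m)"
      proof (rule sum.mono_neutral_left)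
        show "{..degree (Qp N a b z k)} \<subseteq> {0..<N}" using degree_Qp[of N a b z k] k' by auto
        show "\<forall>i\<in>{0..<N} - {..degree (Qp N a b z k)}. coeff (Qp N a b z k) i * z j ^ i = 0"
          by (auto simp: coeff_eq_0)
      qed auto
      finally show ?thesis by (simp add: mult.commute)
    qed
    also have "\<dots> = (V * U) $$ (j, k)"
      using j' k' unfolding V_def U_def by (simp add: scalar_prod_def)
    finally show "(S * (D * V)) $$ (j, k) = (V * U) $$ (j, k)" .
  qed (use carr in auto)
  have detD: "det D = (\<Prod>i<N. 1 - z i ^ 2)"
  proof -
    have "upper_triangular D" unfolding D_def by (auto simp: upper_triangular_def)
    then have "det D = prod_list (diag_mat D)" using carr by (intro det_upper_triangular) auto
    also have "\<dots> = (\<Prod>i<N. 1 - z i ^ 2)"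
      unfolding diag_mat_def D_def by (simp add: prod_list_upt)
    finally show ?thesis .
  qed
  have detU: "det U = (\<Prod>k<N. (of_nat k + 1) * (2 * of_nat N + a + b - of_nat k) / 2)"
  proof -
    have "upper_triangular U" unfolding U_def by (auto simp: upper_triangular_def coeff_Qp_zero)
    then have "det U = prod_list (diag_mat U)" using carr by (intro det_upper_triangular) auto
    also have "\<dots> = (\<Prod>k<N. (of_nat k + 1) * (2 * of_nat N + a + b - of_nat k) / 2)"
      unfolding diag_mat_def U_def by (simp add: prod_list_upt coeff_Qp_diag)
    finally show ?thesis .
  qed
  have "det S * (det D * det V) = det V * det U"
  proof -
    have "det (S * (D * V)) = det S * det (D * V)" using carr by (intro det_mult) auto
    also have "det (D * V) = det D * det V" using carr by (intro det_mult) auto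
    finally have "det (S * (D * V)) = det S * (det D * det V)" .
    moreover have "det (V * U) = det V * det U" using carr by (intro det_mult) auto
    ultimately show ?thesis using eq by metis
  qed
  moreover have "det V \<noteq> 0" unfolding V_def by (rule vandermonde_det_nz[OF inj])
  ultimately have "det S * det D = det U" by (simp add: algebra_simps)
  then show ?thesis unfolding detD detU S_def .
qed

definition ck :: "nat \<Rightarrow> real \<Rightarrow> real \<Rightarrow> nat \<Rightarrow> real" where
  "ck N a b k = pochhammer (- real N) k * pochhammer (real N + a + b + 1) k / (pochhammer (a + 1) k * fact k)"

definition qp :: "nat \<Rightarrow> real \<Rightarrow> real \<Rightarrow> real poly" where
  "qp N a b = (\<Sum>k\<le>N. monom (ck N a b k) k)"

lemma poly_qp: "poly (qp N a b) t = (\<Sum>k\<le>N. ck N a b k * t ^ k)"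
  unfolding qp_def by (simp add: poly_sum poly_monom)

lemma jacobiP_qp: "jacobiP N a b x = pochhammer (a + 1) N / fact N * poly (qp N a b) ((1 - x) / 2)"
  unfolding jacobiP_def poly_qp ck_def by (simp add: atLeast0AtMost)

lemma coeff_qp: "coeff (qp N a b) i = (if i \<le> N then ck N a b i else 0)"
  unfolding qp_def by (simp add: coeff_sum coeff_monom)

lemma ck_rec:
  assumes a: "a > -1"
  shows "(of_nat k + 1) * (of_nat k + 1 + a) * ck N a b (Suc k) = (of_nat k - of_nat N) * (of_nat k + of_nat N + a + b + 1) * ck N a b k"
proof -
  define X where "X = pochhammer (- real N) k * pochhammer (real N + a + b + 1) k"
  define P where "P = pochhammer (a + 1) k"
  define F where "F = (fact k :: real)"
  have p0: "P \<noteq> 0" unfolding P_def using a by (intro order.strict_implies_not_eq[symmetric] pochhammer_pos) simp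
  have f0: "F \<noteq> 0" unfolding F_def by simp
  have a0: "of_nat k + 1 + a \<noteq> 0" using a by simp
  have e0: "(of_nat k + 1 :: real) \<noteq> 0" by simp
  have c: "ck N a b k = X / (P * F)" unfolding ck_def X_def P_def F_def ..
  have cs: "ck N a b (Suc k) = X * ((of_nat k - of_nat N) * (of_nat k + of_nat N + a + b + 1)) / (P * (of_nat k + 1 + a) * ((of_nat k + 1) * F))"
    unfolding ck_def X_def P_def F_def pochhammer_Suc fact_Suc by (simp add: algebra_simps)
  have gen: "\<And>X P F d e u::real. P \<noteq> 0 \<Longrightarrow> F \<noteq> 0 \<Longrightarrow> d \<noteq> 0 \<Longrightarrow> e \<noteq> 0 \<Longrightarrow>
      e * d * (X * u / (P * d * (e * F))) = u * (X / (P * F))"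
    by (simp add: field_simps)
  show ?thesis unfolding c cs using gen[OF p0 f0 a0 e0] by (simp add: mult.assoc)
qed

lemma pderiv_sum': "pderiv (sum f A) = (\<Sum>x\<in>A. pderiv (f x))"
  using higher_pderiv_sum[of 1 f A] by simp

lemma qp_ode:
  assumes a: "a > -1"
  shows "t * (1 - t) * poly (pderiv (pderiv (qp N a b))) t + ((a + 1) - (a + b + 2) * t) * poly (pderiv (qp N a b)) t
     + of_nat N * (of_nat N + a + b + 1) * poly (qp N a b) t = 0"
proof -
  let ?c = "ck N a b"
  have d1: "pderiv (qp N a b) = (\<Sum>k\<le>N. monom (of_nat k * ?c k) (k - 1))"
    unfolding qp_def by (simp add: pderiv_sum' pderiv_monom)
  have d2: "pderiv (pderiv (qp N a b)) = (\<Sum>k\<le>N. monom (of_nat (k - 1) * (of_nat k * ?c k)) (k - 1 - 1))"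
    unfolding d1 by (simp add: pderiv_sum' pderiv_monom)
  have tm: "t * (1 - t) * (of_nat (k - 1) * (of_nat k * ?c k) * t ^ (k - 1 - 1))
      + ((a + 1) - (a + b + 2) * t) * (of_nat k * ?c k * t ^ (k - 1))
      + of_nat N * (of_nat N + a + b + 1) * (?c k * t ^ k)
      = of_nat k * (of_nat k + a) * ?c k * t ^ (k - 1)
        - (of_nat k - of_nat N) * (of_nat k + of_nat N + a + b + 1) * ?c k * t ^ k" for k
  proof (cases k)
    case 0 then show ?thesis by (simp add: algebra_simps)
  next
    case (Suc k')
    note k' = Suc
    show ?thesis
    proof (cases k')
      case 0 then show ?thesis using k' by (simp add: algebra_simps)
    next
      case (Suc k'')
      then show ?thesis using k' by (simp add: algebra_simps)
    qed
  qed
  have "t * (1 - t) * poly (pderiv (pderiv (qp N a b))) t + ((a + 1) - (a + b + 2) * t) * poly (pderiv (qp N a b)) t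
     + of_nat N * (of_nat N + a + b + 1) * poly (qp N a b) t
     = (\<Sum>k\<le>N. t * (1 - t) * (of_nat (k - 1) * (of_nat k * ?c k) * t ^ (k - 1 - 1))
      + ((a + 1) - (a + b + 2) * t) * (of_nat k * ?c k * t ^ (k - 1))
      + of_nat N * (of_nat N + a + b + 1) * (?c k * t ^ k))"
    unfolding d2 unfolding d1 poly_qp by (simp add: poly_sum poly_monom sum_distrib_left sum.distrib)
  also have "\<dots> = (\<Sum>k\<le>N. of_nat k * (of_nat k + a) * ?c k * t ^ (k - 1))
        - (\<Sum>k\<le>N. (of_nat k - of_nat N) * (of_nat k + of_nat N + a + b + 1) * ?c k * t ^ k)"
    unfolding tm by (simp add: sum_subtractf)
  also have "(\<Sum>k\<le>N. of_nat k * (of_nat k + a) * ?c k * t ^ (k - 1))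
      = (\<Sum>k<N. (of_nat k + 1) * (of_nat k + 1 + a) * ?c (Suc k) * t ^ k)"
    by (subst sum.atMost_shift) (simp add: algebra_simps)
  also have "(\<Sum>k\<le>N. (of_nat k - of_nat N) * (of_nat k + of_nat N + a + b + 1) * ?c k * t ^ k)
      = (\<Sum>k<N. (of_nat k - of_nat N) * (of_nat k + of_nat N + a + b + 1) * ?c k * t ^ k)"
    by (simp add: lessThan_Suc_atMost[symmetric])
  also have "(\<Sum>k<N. (of_nat k + 1) * (of_nat k + 1 + a) * ?c (Suc k) * t ^ k)
      = (\<Sum>k<N. (of_nat k - of_nat N) * (of_nat k + of_nat N + a + b + 1) * ?c k * t ^ k)"
    using ck_rec[OF a] by simp
  finally show ?thesis by simp
qed

lemma root_derivs:
  fixes \<tau> :: "nat \<Rightarrow> real"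
  assumes inj: "inj_on \<tau> {0..<N}" and j: "j < N"
  shows "poly (pderiv (smult L (\<Prod>l<N. [:-\<tau> l, 1:]))) (\<tau> j) = L * (\<Prod>l\<in>{0..<N} - {j}. (\<tau> j - \<tau> l))"
    and "poly (pderiv (pderiv (smult L (\<Prod>l<N. [:-\<tau> l, 1:])))) (\<tau> j)
          = 2 * L * (\<Prod>l\<in>{0..<N} - {j}. (\<tau> j - \<tau> l)) * (\<Sum>l\<in>{0..<N} - {j}. 1 / (\<tau> j - \<tau> l))"
proof -
  let ?I = "{0..<N} - {j}"
  define f where "f = (\<lambda>l. [:-\<tau> l, 1:])"
  define r where "r = (\<Prod>l\<in>?I. f l)"
  define R where "R = (\<Prod>l\<in>?I. (\<tau> j - \<tau> l))"
  have split: "(\<Prod>l<N. [:-\<tau> l, 1:]) = f j * r"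
    unfolding r_def f_def using j by (simp add: lessThan_atLeast0 prod.remove[of "{0..<N}" j])
  have df: "pderiv (f j) = 1" unfolding f_def by (simp add: pderiv_pCons)
  have pf: "poly (f j) (\<tau> j) = 0" unfolding f_def by simp
  have d1: "pderiv (smult L (f j * r)) = smult L (f j * pderiv r + r)"
    by (simp add: pderiv_smult pderiv_mult df)
  have d2: "pderiv (pderiv (smult L (f j * r))) = smult L (f j * pderiv (pderiv r) + 2 * pderiv r)"
    unfolding d1 by (simp add: pderiv_smult pderiv_mult pderiv_add df algebra_simps mult_2)
  have pr: "poly r (\<tau> j) = R" unfolding r_def R_def f_def by (simp add: poly_prod)
  have neq: "\<tau> j - \<tau> l \<noteq> 0" if "l \<in> ?I" for l
    using that inj j by (auto dest: inj_onD)
  have pr': "poly (pderiv r) (\<tau> j) = R * (\<Sum>l\<in>?I. 1 / (\<tau> j - \<tau> l))"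
  proof -
    have "poly (pderiv r) (\<tau> j) = (\<Sum>m\<in>?I. \<Prod>l\<in>?I - {m}. (\<tau> j - \<tau> l))"
      unfolding r_def pderiv_prod f_def by (simp add: poly_sum poly_prod pderiv_pCons)
    also have "\<dots> = (\<Sum>m\<in>?I. R * (1 / (\<tau> j - \<tau> m)))"
    proof (rule sum.cong)
      fix m assume m: "m \<in> ?I"
      have "R = (\<tau> j - \<tau> m) * (\<Prod>l\<in>?I - {m}. (\<tau> j - \<tau> l))"
        unfolding R_def using m by (simp add: prod.remove[of ?I m])
      then show "(\<Prod>l\<in>?I - {m}. (\<tau> j - \<tau> l)) = R * (1 / (\<tau> j - \<tau> m))"
        using neq[OF m] by (simp add: field_simps)
    qed simp
    finally show ?thesis by (simp add: sum_distrib_left)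
  qed
  show "poly (pderiv (smult L (\<Prod>l<N. [:-\<tau> l, 1:]))) (\<tau> j) = L * (\<Prod>l\<in>{0..<N} - {j}. (\<tau> j - \<tau> l))"
    unfolding split d1 using pf pr by (simp add: R_def)
  show "poly (pderiv (pderiv (smult L (\<Prod>l<N. [:-\<tau> l, 1:])))) (\<tau> j)
          = 2 * L * (\<Prod>l\<in>{0..<N} - {j}. (\<tau> j - \<tau> l)) * (\<Sum>l\<in>{0..<N} - {j}. 1 / (\<tau> j - \<tau> l))"
    unfolding split d2 using pf pr' by (simp add: R_def)
qed

lemma linprod_degree: "degree (\<Prod>l<N. [:-(\<tau> l::real), 1:]) = N"
  by (subst degree_prod_eq_sum_degree) auto

lemma linprod_lead: "coeff (\<Prod>l<N. [:-(\<tau> l::real), 1:]) N = 1"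
proof -
  have "coeff (\<Prod>l<N. [:-(\<tau> l::real), 1:]) N = lead_coeff (\<Prod>l<N. [:-(\<tau> l::real), 1:])"
    by (simp add: linprod_degree)
  also have "\<dots> = 1" by (simp add: lead_coeff_prod)
  finally show ?thesis .
qed

lemma qp_factor:
  assumes inj: "inj_on \<tau> {0..<N}" and roots: "\<And>j. j < N \<Longrightarrow> poly (qp N a b) (\<tau> j) = 0"
  shows "qp N a b = smult (ck N a b N) (\<Prod>l<N. [:-\<tau> l, 1:])"
proof (rule poly_eqI_degree_lead_coeff[where n=N and A="\<tau> ` {0..<N}"])
  show "coeff (qp N a b) N = coeff (smult (ck N a b N) (\<Prod>l<N. [:-\<tau> l, 1:])) N"
    by (simp add: coeff_qp linprod_lead)
  show "N \<le> card (\<tau> ` {0..<N})" using inj by (simp add: card_image)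
  show "degree (qp N a b) \<le> N" by (rule degree_le) (simp add: coeff_qp)
  show "degree (smult (ck N a b N) (\<Prod>l<N. [:-\<tau> l, 1:])) \<le> N"
    using degree_smult_le[of "ck N a b N" "\<Prod>l<N. [:-\<tau> l, 1:]"] linprod_degree[where N=N and \<tau>=\<tau>] by simp
  fix x assume "x \<in> \<tau> ` {0..<N}"
  then obtain j where j: "j < N" "x = \<tau> j" by auto
  have "poly (\<Prod>l<N. [:-\<tau> l, 1:]) (\<tau> j) = 0"
    using j by (simp add: poly_prod) (metis lessThan_iff)
  then show "poly (qp N a b) x = poly (smult (ck N a b N) (\<Prod>l<N. [:-\<tau> l, 1:])) x"
    using roots j by simp
qed

lemma prod_succ_fact: "(\<Prod>k<n. (of_nat k + 1 :: real)) = fact n"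
  by (induction n) (auto simp: algebra_simps)

lemma prod_desc_pochhammer: "(\<Prod>k<n. (y - of_nat k :: real)) = pochhammer (y - of_nat n + 1) n"
proof (induction n)
  case 0 then show ?case by simp
next
  case (Suc n)
  have "pochhammer (y - of_nat (Suc n) + 1) (Suc n) = (y - of_nat n) * pochhammer (y - of_nat n + 1) n"
    by (simp add: pochhammer_rec algebra_simps)
  then show ?case using Suc by (simp add: algebra_simps)
qed

lemma prod_k_formula:
  "(\<Prod>k<N. (of_nat k + 1) * (2 * of_nat N + a + b - of_nat k) / 2) = fact N * pochhammer (real N + a + b + 1) N / 2 ^ N"
proof -
  have "(\<Prod>k<N. (of_nat k + 1) * (2 * of_nat N + a + b - of_nat k) / 2)
      = (\<Prod>k<N. (of_nat k + 1 :: real)) * (\<Prod>k<N. (2 * of_nat N + a + b - of_nat k)) * (\<Prod>k<N. (1/2::real))"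
  proof -
    have "(\<Prod>k<N. (of_nat k + 1) * (2 * of_nat N + a + b - of_nat k) / 2)
        = (\<Prod>k<N. ((of_nat k + 1) * (2 * of_nat N + a + b - of_nat k)) * (1/2::real))"
      by (rule prod.cong) auto
    also have "\<dots> = (\<Prod>k<N. (of_nat k + 1 :: real)) * (\<Prod>k<N. (2 * of_nat N + a + b - of_nat k)) * (\<Prod>k<N. (1/2::real))"
      by (simp only: prod.distrib)
    finally show ?thesis .
  qed
  also have "(\<Prod>k<N. (2 * of_nat N + a + b - of_nat k)) = pochhammer (real N + a + b + 1) N"
    by (subst prod_desc_pochhammer) (simp add: algebra_simps)
  finally show ?thesis by (simp add: prod_succ_fact power_one_over)
qed

lemma det_S_empty: "det (S_matrix 0 a b z) = 1"
  by (simp add: S_matrix_def det_def)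

theorem proposition2p7:
  fixes N :: nat and a b :: real and z :: "nat \<Rightarrow> real"
  assumes "a > -1" and "b > -1"
    and "strict_mono_on {0..<N} z"
    and "{x. jacobiP N a b x = 0} = z ` {0..<N}"
  shows "det (S_matrix N a b z) =
     fact N / 2 ^ (3 * N) * (pochhammer (real N + a + b + 1) N) ^ 3
       / (pochhammer (a + 1) N * pochhammer (b + 1) N)"
proof (cases "N = 0")
  case True
  then show ?thesis using det_S_empty by simp
next
  case False
  then have N0: "N > 0" by simp
  note a = assms(1) and b = assms(2)
  define Pa where "Pa = pochhammer (a + 1) N"
  define Pb where "Pb = pochhammer (b + 1) N"
  define PB where "PB = pochhammer (real N + a + b + 1) N"
  define L where "L = ck N a b N"
  define \<tau> where "\<tau> = (\<lambda>j. (1 - z j) / 2)"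
  have Pa0: "Pa > 0" unfolding Pa_def using a by (intro pochhammer_pos) simp
  have Pb0: "Pb > 0" unfolding Pb_def using b by (intro pochhammer_pos) simp
  have PB0: "PB > 0" unfolding PB_def using a b N0 by (intro pochhammer_pos) simp
  have injz: "inj_on z {0..<N}" using assms(3) by (rule strict_mono_on_imp_inj_on)
  have injt: "inj_on \<tau> {0..<N}" using injz unfolding \<tau>_def by (auto simp: inj_on_def)
  have roots: "poly (qp N a b) (\<tau> j) = 0" if j: "j < N" for j
  proof -
    have "z j \<in> {x. jacobiP N a b x = 0}" using assms(4) j by auto
    then have "jacobiP N a b (z j) = 0" by simp
    then have "Pa / fact N * poly (qp N a b) (\<tau> j) = 0" unfolding jacobiP_qp \<tau>_def Pa_def .
    then show ?thesis using Pa0 by simp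
  qed
  have fac: "qp N a b = smult L (\<Prod>l<N. [:-\<tau> l, 1:])"
    unfolding L_def by (rule qp_factor[OF injt roots])
  have L: "L = (-1)^N * PB / Pa"
  proof -
    have "pochhammer (- real N) N = (-1)^N * fact N"
      by (simp add: pochhammer_minus pochhammer_fact)
    then show ?thesis unfolding L_def ck_def PB_def Pa_def by simp
  qed
  have L0: "L \<noteq> 0" unfolding L using Pa0 PB0 by simp
  have q0: "poly (qp N a b) 0 = 1"
    unfolding poly_qp by (simp add: ck_def atMost_atLeast0 sum.atLeast_Suc_atMost zero_power)
  have q1: "poly (qp N a b) 1 = (-1)^N * Pb / Pa"
  proof -
    have "poly (qp N a b) 1 = (\<Sum>k\<in>{0..N}. (pochhammer (real N + a + b + 1) k * pochhammer (- (of_nat N)) k) / (of_nat (fact k) * pochhammer (a + 1) k))"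
      unfolding poly_qp ck_def by (simp add: atMost_atLeast0 mult.commute)
    also have "\<dots> = pochhammer (a + 1 - (real N + a + b + 1)) N / pochhammer (a + 1) N"
      by (rule Vandermonde_pochhammer) (use a in \<open>auto\<close>)
    also have "pochhammer (a + 1 - (real N + a + b + 1)) N = (-1)^N * Pb"
    proof -
      have "a + 1 - (real N + a + b + 1) = - (real N + b)" by simp
      then show ?thesis unfolding Pb_def by (simp only: pochhammer_minus) (simp add: algebra_simps)
    qed
    finally show ?thesis unfolding Pa_def by simp
  qed
  have P0: "L * ((-1)^N * (\<Prod>l<N. \<tau> l)) = 1"
  proof -
    have "poly (qp N a b) 0 = L * (\<Prod>l<N. (- \<tau> l))" unfolding fac by (simp add: poly_prod)
    then show ?thesis using q0 by (simp add: prod_uminus)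
  qed
  have P1: "L * (\<Prod>l<N. (1 - \<tau> l)) = (-1)^N * Pb / Pa"
  proof -
    have "poly (qp N a b) 1 = L * (\<Prod>l<N. (1 - \<tau> l))" unfolding fac by (simp add: poly_prod)
    then show ?thesis using q1 by simp
  qed
  have t0: "\<tau> j \<noteq> 0" if "j < N" for j
    using roots[OF that] q0 by auto
  have t1: "\<tau> j \<noteq> 1" if "j < N" for j
    using roots[OF that] q1 Pa0 Pb0 by auto
  have z1: "z j \<noteq> 1 \<and> z j \<noteq> -1" if j: "j < N" for j
    using t0[OF j] t1[OF j] unfolding \<tau>_def by auto
  have st: "(1 - z j ^ 2) * (\<Sum>l\<in>{0..<N} - {j}. 1 / (z j - z l)) = ((a - b) + (a + b + 2) * z j) / 2"
    if j: "j < N" for j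
  proof -
    let ?I = "{0..<N} - {j}"
    define R where "R = (\<Prod>l\<in>?I. (\<tau> j - \<tau> l))"
    define st where "st = (\<Sum>l\<in>?I. 1 / (\<tau> j - \<tau> l))"
    have R0: "R \<noteq> 0" unfolding R_def using injt j by (auto dest: inj_onD)
    have d1: "poly (pderiv (qp N a b)) (\<tau> j) = L * R"
      unfolding fac R_def by (rule root_derivs(1)[OF injt j])
    have d2: "poly (pderiv (pderiv (qp N a b))) (\<tau> j) = 2 * L * R * st"
      unfolding fac R_def st_def by (rule root_derivs(2)[OF injt j])
    have "\<tau> j * (1 - \<tau> j) * (2 * L * R * st) + ((a + 1) - (a + b + 2) * \<tau> j) * (L * R) = 0"
      using qp_ode[OF a, where t="\<tau> j" and N=N and b=b] unfolding d1 d2 roots[OF j] by simp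
    then have "(L * R) * (2 * \<tau> j * (1 - \<tau> j) * st + ((a + 1) - (a + b + 2) * \<tau> j)) = 0"
      by (simp add: algebra_simps)
    then have e: "2 * \<tau> j * (1 - \<tau> j) * st + ((a + 1) - (a + b + 2) * \<tau> j) = 0"
      using L0 R0 by simp
    have sz: "st = -2 * (\<Sum>l\<in>?I. 1 / (z j - z l))"
      unfolding st_def \<tau>_def sum_distrib_left
    proof (rule sum.cong)
      fix l assume l: "l \<in> ?I"
      then have d: "z j - z l \<noteq> 0" using injz j by (auto dest: inj_onD)
      have e: "(1 - z j) / 2 - (1 - z l) / 2 = - (z j - z l) / 2" by (simp add: field_simps)
      have gen: "\<And>D::real. D \<noteq> 0 \<Longrightarrow> 1 / (- D / 2) = -2 * (1 / D)" by (simp add: field_simps)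
      show "1 / ((1 - z j) / 2 - (1 - z l) / 2) = -2 * (1 / (z j - z l))"
        unfolding e by (rule gen[OF d])
    qed simp
    show ?thesis using e unfolding sz \<tau>_def by (simp add: field_simps power2_eq_square)
  qed
  have M: "det (S_matrix N a b z) * (\<Prod>i<N. 1 - z i ^ 2) = fact N * PB / 2 ^ N"
    using matrix_det[OF injz z1 st] prod_k_formula unfolding PB_def by simp
  have prodz: "(\<Prod>i<N. 1 - z i ^ 2) = 4 ^ N * (Pa / PB) * (Pb / PB)"
  proof -
    have "(\<Prod>i<N. 1 - z i ^ 2) = (\<Prod>i<N. 4 * (\<tau> i * (1 - \<tau> i)))"
      unfolding \<tau>_def by (rule prod.cong) (auto simp: field_simps power2_eq_square)
    also have "\<dots> = 4 ^ N * (\<Prod>l<N. \<tau> l) * (\<Prod>l<N. (1 - \<tau> l))"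
      by (simp add: prod.distrib)
    also have "(\<Prod>l<N. \<tau> l) = Pa / PB"
    proof -
      have "((-1::real)^N)^2 = 1" by (simp add: power_mult[symmetric] power_even_eq[symmetric] mult.commute)
      then show ?thesis using P0 Pa0 PB0 unfolding L by (simp add: field_simps power2_eq_square)
    qed
    also have "(\<Prod>l<N. (1 - \<tau> l)) = Pb / PB"
    proof -
      have "((-1::real)^N)^2 = 1" by (simp add: power_mult[symmetric] power_even_eq[symmetric] mult.commute)
      then show ?thesis using P1 Pa0 PB0 unfolding L by (simp add: field_simps power2_eq_square)
    qed
    finally show ?thesis by simp
  qed
  have nz: "(\<Prod>i<N. 1 - z i ^ 2) \<noteq> 0" unfolding prodz using Pa0 Pb0 PB0 by simp
  have "det (S_matrix N a b z) = fact N * PB / 2 ^ N / (4 ^ N * (Pa / PB) * (Pb / PB))"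
    using M nz unfolding prodz by (simp add: field_simps)
  also have "\<dots> = fact N / 2 ^ (3 * N) * PB ^ 3 / (Pa * Pb)"
  proof -
    have "(2::real) ^ (3 * N) = (2 ^ 3) ^ N" by (simp only: power_mult)
    also have "\<dots> = (2 * 4) ^ N" by simp
    also have "\<dots> = 2 ^ N * 4 ^ N" by (simp only: power_mult_distrib)
    finally have "(2::real) ^ (3 * N) = 2 ^ N * 4 ^ N" .
    then show ?thesis using Pa0 Pb0 PB0 by (simp add: field_simps power3_eq_cube)
  qed
  finally show ?thesis unfolding PB_def Pa_def Pb_def .
qed
end
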